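(* For all $f_1,\dots,f_n:\mathscr{P}\to\mathbb{Q}$: (i) $\langle f_1\odot f_2\odot\cdots\odot f_n\rangle_q=\langle f_1\rangle_q\langle f_2\rangle_q\cdots\langle f_n\rangle_q$; (ii) $\langle f_1|\cdots|f_n\rangle_q=\langle f_1\otimes\cdots\otimes f_n\rangle_q$.
   Context: $\mathscr{P}$ is the set of partitions, $|\lambda|=\sum\lambda_i$. $\langle f\rangle_q=\frac{\sum_\lambda f(\lambda)q^{|\lambda|}}{\sum_\lambda q^{|\lambda|}}$. Induced product: with $u_\lambda=\prod_{i:\lambda_i>0}u_{\lambda_i}$ and $\langle f\rangle_{\vec u}=\frac{\sum_\lambda f(\lambda)u_\lambda}{\sum_\lambda u_\lambda}\in\mathbb{Q}[[u_1,u_2,\dots]]$ (a linear bijection in $f$), $f\odot g$ is defined by $\langle f\odot g\rangle_{\vec u}=\langle f\rangle_{\vec u}\langle g\rangle_{\vec u}$. $\Pi(n)$ is the set of set partitions of $\{1,\dots,n\}$, $\ell(\alpha)$ the number of blocks, $\mu(\alpha,\mathbf{1})=(-1)^{\ell(\alpha)-1}(\ell(\alpha)-1)!$, and $f_A=\prod_{a\in A}f_a$ (pointwise product). The connected product is $f_1|\cdots|f_n=\sum_{\alpha\in\Pi(n)}\mu(\alpha,\mathbf{1})\bigodot_{A\in\alpha}f_A$, and the connected $q$-bracket is $\langle f_1\otimes\cdots\otimes f_n\rangle_q=\sum_{\alpha\in\Pi(n)}\mu(\alpha,\mathbf{1})\prod_{A\in\alpha}\langle f_A\rangle_q$. *)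

theory Defs
  imports "HOL-Library.Multiset" "HOL-Library.FuncSet" "HOL-Library.Disjoint_Sets"
          "HOL-Computational_Algebra.Formal_Power_Series"
begin

typedef partition = "{M :: nat multiset. 0 \<notin># M}"
  by (rule exI[of _ "{#}"]) simp

definition psize :: "partition \<Rightarrow> nat" where
  "psize p = sum_mset (Rep_partition p)"

text \<open>A monomial u_lambda = prod u_{lambda_i} corresponds bijectively to a partition lambda,
  so an element of Q[[u_1,u_2,...]] is represented by its coefficient function
  F :: partition => rat (F lambda = coefficient of u_lambda). Since u_alpha u_beta = u_(alpha + beta)
  (multiset union), multiplication is the Cauchy product below.\<close>

type_synonym useries = "partition \<Rightarrow> rat"

definition useries_mult :: "useries \<Rightarrow> useries \<Rightarrow> useries" where
  "useries_mult F G p =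
     (\<Sum>(\<alpha>, \<beta>) \<in> {(\<alpha>, \<beta>). Rep_partition \<alpha> + Rep_partition \<beta> = Rep_partition p}.
        F \<alpha> * G \<beta>)"

definition useries_prod :: "'i set \<Rightarrow> ('i \<Rightarrow> useries) \<Rightarrow> useries" where
  "useries_prod I F p =
     (\<Sum>d \<in> {d \<in> I \<rightarrow>\<^sub>E UNIV. (\<Sum>i\<in>I. Rep_partition (d i)) = Rep_partition p}.
        \<Prod>i\<in>I. F i (d i))"

definition ubracket :: "(partition \<Rightarrow> rat) \<Rightarrow> useries" where
  "ubracket f = (THE G. useries_mult G (\<lambda>_. 1) = f)"

definition induced_prod :: "(partition \<Rightarrow> rat) \<Rightarrow> (partition \<Rightarrow> rat) \<Rightarrow> (partition \<Rightarrow> rat)" where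
  "induced_prod f g = (THE h. ubracket h = useries_mult (ubracket f) (ubracket g))"

fun odot_list :: "(partition \<Rightarrow> rat) list \<Rightarrow> (partition \<Rightarrow> rat)" where
  "odot_list [] = (\<lambda>_. 1)"
| "odot_list [g] = g"
| "odot_list (g # h # gs) = induced_prod g (odot_list (h # gs))"

definition odot_set :: "'i set \<Rightarrow> ('i \<Rightarrow> partition \<Rightarrow> rat) \<Rightarrow> (partition \<Rightarrow> rat)" where
  "odot_set I g = (THE h. ubracket h = useries_prod I (\<lambda>i. ubracket (g i)))"

definition qbracket :: "(partition \<Rightarrow> rat) \<Rightarrow> rat fps" where
  "qbracket f =
     Abs_fps (\<lambda>n. \<Sum>p \<in> {p. psize p = n}. f p) /
     Abs_fps (\<lambda>n. of_nat (card {p. psize p = n}))"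

definition set_partitions :: "nat \<Rightarrow> nat set set set" where
  "set_partitions n = {\<alpha>. partition_on {1..n} \<alpha>}"

definition mu_one :: "nat set set \<Rightarrow> int" where
  "mu_one \<alpha> = (-1) ^ (card \<alpha> - 1) * fact (card \<alpha> - 1)"

definition fprod :: "(nat \<Rightarrow> partition \<Rightarrow> rat) \<Rightarrow> nat set \<Rightarrow> partition \<Rightarrow> rat" where
  "fprod f A = (\<lambda>p. \<Prod>a\<in>A. f a p)"

definition connected_prod :: "nat \<Rightarrow> (nat \<Rightarrow> partition \<Rightarrow> rat) \<Rightarrow> (partition \<Rightarrow> rat)" where
  "connected_prod n f =
     (\<lambda>p. \<Sum>\<alpha>\<in>set_partitions n. of_int (mu_one \<alpha>) * odot_set \<alpha> (fprod f) p)"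

definition connected_qbracket :: "nat \<Rightarrow> (nat \<Rightarrow> partition \<Rightarrow> rat) \<Rightarrow> rat fps" where
  "connected_qbracket n f =
     (\<Sum>\<alpha>\<in>set_partitions n. of_int (mu_one \<alpha>) * (\<Prod>A\<in>\<alpha>. qbracket (fprod f A)))"

end

theory Submission
  imports Defs
begin
unbundle fps_syntax

lemma Rep_pos: "0 \<notin># Rep_partition p"
  using Rep_partition by auto

definition padd :: "partition \<Rightarrow> partition \<Rightarrow> partition" where
  "padd a b = Abs_partition (Rep_partition a + Rep_partition b)"

lemma Rep_padd: "Rep_partition (padd a b) = Rep_partition a + Rep_partition b"
  unfolding padd_def using Rep_pos[of a] Rep_pos[of b]
  by (subst Abs_partition_inverse) auto

lemma psize_padd: "psize (padd a b) = psize a + psize b"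
  by (simp add: psize_def Rep_padd)

lemma size_le_sum_pos: "0 \<notin># (M::nat multiset) \<Longrightarrow> size M \<le> sum_mset M"
proof (induction M)
  case empty then show ?case by simp
next
  case (add x M)
  then have "x \<ge> 1" by (cases x) auto
  with add show ?case by simp
qed

lemma elem_le_sum: "(x::nat) \<in># M \<Longrightarrow> x \<le> sum_mset M"
  by (induction M) auto

lemma finite_psize_le: "finite {p. psize p \<le> n}"
proof -
  have "Rep_partition ` {p. psize p \<le> n} \<subseteq> (\<Union>k\<in>{..n}. multisets_of_size {1..n} k)"
  proof
    fix M assume "M \<in> Rep_partition ` {p. psize p \<le> n}"
    then obtain p where M: "M = Rep_partition p" "psize p \<le> n" by auto
    have "set_mset M \<subseteq> {1..n}"
    proof
      fix x assume "x \<in> set_mset M"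
      then have x1: "x \<le> sum_mset M" using elem_le_sum[of x M] by simp
      have x2: "x \<noteq> 0" using \<open>x \<in> set_mset M\<close> Rep_pos[of p] M(1) by metis
      show "x \<in> {1..n}" using x1 x2 M by (auto simp: psize_def)
    qed
    moreover have "size M \<le> n" using size_le_sum_pos[of M] Rep_pos[of p] M by (auto simp: psize_def)
    ultimately show "M \<in> (\<Union>k\<in>{..n}. multisets_of_size {1..n} k)"
      unfolding multisets_of_size_def using \<open>size M \<le> n\<close> by blast
  qed
  then have "finite (Rep_partition ` {p. psize p \<le> n})"
    by (rule finite_subset) (intro finite_UN_I finite_atMost finite_multisets_of_size finite_atLeastAtMost)
  then show ?thesis
    by (rule finite_imageD) (simp add: inj_on_def Rep_partition_inject)
qed

lemma finite_psize_eq: "finite {p. psize p = n}"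
  by (rule finite_subset[OF _ finite_psize_le[of n]]) auto

lemma psize_mono: "Rep_partition a \<subseteq># Rep_partition b \<Longrightarrow> psize a \<le> psize b"
proof -
  assume "Rep_partition a \<subseteq># Rep_partition b"
  then obtain c where "Rep_partition b = Rep_partition a + c" by (auto simp: mset_subset_eq_exists_conv)
  then show ?thesis unfolding psize_def by simp
qed

definition pairs :: "partition \<Rightarrow> (partition \<times> partition) set" where
  "pairs p = {(\<alpha>, \<beta>). Rep_partition \<alpha> + Rep_partition \<beta> = Rep_partition p}"

lemma finite_pairs: "finite (pairs p)"
proof -
  have "pairs p \<subseteq> {a. psize a \<le> psize p} \<times> {a. psize a \<le> psize p}"
  proof
    fix x assume "x \<in> pairs p"
    then obtain a b where x: "x = (a, b)" "Rep_partition a + Rep_partition b = Rep_partition p"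
      by (auto simp: pairs_def)
    then have "psize a + psize b = psize p" unfolding psize_def by (metis sum_mset.union)
    then show "x \<in> {a. psize a \<le> psize p} \<times> {a. psize a \<le> psize p}" using x(1) by auto
  qed
  then show ?thesis by (rule finite_subset) (intro finite_cartesian_product finite_psize_le)
qed

definition spec :: "useries \<Rightarrow> rat fps" where
  "spec F = Abs_fps (\<lambda>n. \<Sum>p\<in>{p. psize p = n}. F p)"

lemma spec_nth: "spec F $ n = (\<Sum>p\<in>{p. psize p = n}. F p)"
  by (simp add: spec_def)

lemma Rep_inj: "Rep_partition a = Rep_partition b \<longleftrightarrow> a = b"
  by (simp add: Rep_partition_inject)

lemma useries_mult_pairs: "useries_mult F G p = (\<Sum>x\<in>pairs p. F (fst x) * G (snd x))"
  unfolding useries_mult_def pairs_def by (simp add: case_prod_beta)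

lemma spec_mult: "spec (useries_mult F G) = spec F * spec G"
proof (rule fps_ext)
  fix n
  define S where "S = {x::partition \<times> partition. psize (fst x) + psize (snd x) = n}"
  define h where "h = (\<lambda>x::partition \<times> partition. F (fst x) * G (snd x))"
  have fS: "finite S"
  proof -
    have "S \<subseteq> {a. psize a \<le> n} \<times> {a. psize a \<le> n}" unfolding S_def by auto
    then show ?thesis by (rule finite_subset) (intro finite_cartesian_product finite_psize_le)
  qed
  have 1: "(\<Sum>p\<in>{p. psize p = n}. \<Sum>x\<in>{x\<in>S. case_prod padd x = p}. h x) = sum h S"
    by (rule sum.group[OF fS finite_psize_eq]) (auto simp: S_def psize_padd)
  have 2: "{x\<in>S. case_prod padd x = p} = pairs p" if "psize p = n" for p
  proof -
    have "x \<in> S" if "x \<in> pairs p" for x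
    proof -
      obtain a b where x: "x = (a, b)" "Rep_partition a + Rep_partition b = Rep_partition p"
        using \<open>x \<in> pairs p\<close> by (auto simp: pairs_def)
      then have "psize a + psize b = psize p" unfolding psize_def by (simp flip: sum_mset.union)
      then show ?thesis using x \<open>psize p = n\<close> by (simp add: S_def)
    qed
    moreover have "case_prod padd x = p \<longleftrightarrow> x \<in> pairs p" for x
      by (cases x) (auto simp: pairs_def simp flip: Rep_inj simp: Rep_padd)
    ultimately show ?thesis by auto
  qed
  have 3: "(\<Sum>i\<in>{0..n}. \<Sum>x\<in>{x\<in>S. psize (fst x) = i}. h x) = sum h S"
    by (rule sum.group[OF fS]) (auto simp: S_def)
  have 4: "{x\<in>S. psize (fst x) = i} = {p. psize p = i} \<times> {p. psize p = n - i}" if "i \<in> {0..n}" for i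
    using that by (auto simp: S_def)
  have "spec (useries_mult F G) $ n = (\<Sum>p\<in>{p. psize p = n}. \<Sum>x\<in>pairs p. h x)"
    by (simp add: spec_nth useries_mult_pairs h_def)
  also have "\<dots> = sum h S" using 1 2 by simp
  also have "\<dots> = (\<Sum>i\<in>{0..n}. \<Sum>x\<in>{p. psize p = i} \<times> {p. psize p = n - i}. h x)"
    using 3 4 by simp
  also have "\<dots> = (\<Sum>i=0..n. spec F $ i * spec G $ (n - i))"
    by (simp add: spec_nth sum_product sum.cartesian_product h_def case_prod_beta)
  also have "\<dots> = (spec F * spec G) $ n" by (simp add: fps_mult_nth)
  finally show "spec (useries_mult F G) $ n = (spec F * spec G) $ n" .
qed

definition ssubs :: "partition \<Rightarrow> partition set" where
  "ssubs p = {a. Rep_partition a \<subset># Rep_partition p}"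

lemma psize_strict: "Rep_partition a \<subset># Rep_partition p \<Longrightarrow> psize a < psize p"
proof -
  assume "Rep_partition a \<subset># Rep_partition p"
  then obtain c where c: "Rep_partition p = Rep_partition a + c" "c \<noteq> {#}"
    by (metis subset_mset.lessE)
  then obtain x where x: "x \<in># c" by blast
  then have "x \<in># Rep_partition p" using c by simp
  then have "x \<noteq> 0" using Rep_pos[of p] by metis
  moreover have "x \<le> sum_mset c" using x elem_le_sum by blast
  ultimately show ?thesis using c unfolding psize_def by simp
qed

lemma finite_ssubs: "finite (ssubs p)"
  by (rule finite_subset[OF _ finite_psize_le[of "psize p"]])
     (auto simp: ssubs_def dest!: psize_strict)

lemma p_notin_ssubs: "p \<notin> ssubs p"
  by (simp add: ssubs_def)

lemma fst_pairs: "fst ` pairs p = insert p (ssubs p)"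
proof
  show "fst ` pairs p \<subseteq> insert p (ssubs p)"
    by (auto simp: pairs_def ssubs_def Rep_inj[symmetric] subset_mset.less_le)
       (metis mset_subset_eq_add_left)
  show "insert p (ssubs p) \<subseteq> fst ` pairs p"
  proof
    fix a assume "a \<in> insert p (ssubs p)"
    then have sub: "Rep_partition a \<subseteq># Rep_partition p" by (auto simp: ssubs_def)
    define b where "b = Abs_partition (Rep_partition p - Rep_partition a)"
    have "0 \<notin># Rep_partition p - Rep_partition a" using Rep_pos[of p] by (meson in_diffD)
    then have Rb: "Rep_partition b = Rep_partition p - Rep_partition a"
      unfolding b_def by (subst Abs_partition_inverse) auto
    then have "(a, b) \<in> pairs p" using sub by (simp add: pairs_def)
    then show "a \<in> fst ` pairs p" by force
  qed
qed

lemma inj_fst_pairs: "inj_on fst (pairs p)"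
  by (rule inj_onI) (auto simp: pairs_def Rep_inj[symmetric], metis add_left_cancel)

definition ones :: useries where "ones = (\<lambda>_. 1)"

lemma mult_ones: "useries_mult G ones p = G p + (\<Sum>a\<in>ssubs p. G a)"
proof -
  have "useries_mult G ones p = (\<Sum>x\<in>pairs p. G (fst x))"
    by (simp add: useries_mult_pairs ones_def)
  also have "\<dots> = (\<Sum>a\<in>fst ` pairs p. G a)"
    by (simp add: sum.reindex[OF inj_fst_pairs])
  also have "\<dots> = G p + (\<Sum>a\<in>ssubs p. G a)"
    by (simp add: fst_pairs finite_ssubs p_notin_ssubs)
  finally show ?thesis .
qed

function ubinv :: "(partition \<Rightarrow> rat) \<Rightarrow> partition \<Rightarrow> rat" where
  "ubinv f p = f p - (\<Sum>a\<in>ssubs p. ubinv f a)"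
  by auto
termination
  by (relation "measure (\<lambda>(f, p). psize p)") (auto simp: ssubs_def intro: psize_strict)

declare ubinv.simps[simp del]

lemma ubinv_mult: "useries_mult (ubinv f) ones = f"
proof (rule ext)
  fix p
  have "ubinv f p = f p - (\<Sum>a\<in>ssubs p. ubinv f a)" by (rule ubinv.simps)
  then show "useries_mult (ubinv f) ones p = f p" by (simp add: mult_ones)
qed

lemma mult_ones_inj: "useries_mult G ones = useries_mult H ones \<Longrightarrow> G = H"
proof (rule ext)
  fix p assume eq: "useries_mult G ones = useries_mult H ones"
  show "G p = H p"
  proof (induction p rule: measure_induct_rule[of psize])
    case (less p)
    have "(\<Sum>a\<in>ssubs p. G a) = (\<Sum>a\<in>ssubs p. H a)"
      by (rule sum.cong) (auto simp: ssubs_def intro: less psize_strict)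
    moreover have "useries_mult G ones p = useries_mult H ones p" using eq by simp
    ultimately show ?case by (simp add: mult_ones)
  qed
qed

lemma ub_ex1: "\<exists>!G. useries_mult G ones = f"
  using ubinv_mult mult_ones_inj by blast

lemma ub_mult: "useries_mult (ubracket f) ones = f"
  unfolding ubracket_def ones_def[symmetric] by (rule theI'[OF ub_ex1])

lemma ub_eq: "useries_mult G ones = f \<Longrightarrow> ubracket f = G"
  using ub_mult mult_ones_inj by metis

lemma ub_of_mult: "ubracket (useries_mult G ones) = G"
  by (rule ub_eq) simp

lemma psize0: "psize p = 0 \<longleftrightarrow> p = Abs_partition {#}"
proof
  assume "psize p = 0"
  have "Rep_partition p = {#}"
  proof (rule ccontr)
    assume "Rep_partition p \<noteq> {#}"
    then obtain x where x: "x \<in># Rep_partition p" by blast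
    then have "x \<noteq> 0" using Rep_pos[of p] by metis
    moreover have "x \<le> psize p" using x elem_le_sum unfolding psize_def by blast
    ultimately show False using \<open>psize p = 0\<close> by simp
  qed
  then show "p = Abs_partition {#}" by (metis Rep_partition_inverse)
next
  assume "p = Abs_partition {#}"
  then show "psize p = 0" by (simp add: psize_def Abs_partition_inverse)
qed

lemma spec_ones_0: "spec ones $ 0 = 1"
proof -
  have "{p. psize p = 0} = {Abs_partition {#}}" by (auto simp: psize0)
  then show ?thesis by (simp add: spec_nth ones_def)
qed

lemma qbracket_alt: "qbracket f = spec f * inverse (spec ones)"
proof -
  have "Abs_fps (\<lambda>n. of_nat (card {p. psize p = n})) = spec ones"
    by (simp add: spec_def ones_def)
  moreover have "Abs_fps (\<lambda>n. \<Sum>p \<in> {p. psize p = n}. f p) = spec f"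
    by (simp add: spec_def)
  ultimately show ?thesis unfolding qbracket_def using spec_ones_0
    by (simp add: fps_divide_unit)
qed

lemma qbracket_spec: "qbracket f = spec (ubracket f)"
proof -
  have "spec f = spec (ubracket f) * spec ones"
    by (metis ub_mult spec_mult)
  then show ?thesis using spec_ones_0
    by (simp add: qbracket_alt mult.assoc inverse_mult_eq_1')
qed

lemma ub_THE: "ubracket (THE h. ubracket h = X) = X"
proof -
  have "\<exists>!h. ubracket h = X"
  proof
    show "ubracket (useries_mult X ones) = X" by (rule ub_of_mult)
    fix h assume "ubracket h = X"
    then show "h = useries_mult X ones" using ub_mult by metis
  qed
  then show ?thesis by (rule theI')
qed

lemma ub_induced: "ubracket (induced_prod f g) = useries_mult (ubracket f) (ubracket g)"
  unfolding induced_prod_def by (rule ub_THE)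

lemma ub_odot_set: "ubracket (odot_set I g) = useries_prod I (\<lambda>i. ubracket (g i))"
  unfolding odot_set_def by (rule ub_THE)

lemma qbracket_induced: "qbracket (induced_prod f g) = qbracket f * qbracket g"
  by (simp add: qbracket_spec ub_induced spec_mult)

lemma qbracket_odot_list: "xs \<noteq> [] \<Longrightarrow> qbracket (odot_list xs) = prod_list (map qbracket xs)"
  by (induction xs rule: odot_list.induct) (auto simp: qbracket_induced)

lemma spec_lin: "spec (\<lambda>p. \<Sum>a\<in>S. c a * g a p) = (\<Sum>a\<in>S. fps_const (c a) * spec (g a))"
proof (rule fps_ext)
  fix n
  show "spec (\<lambda>p. \<Sum>a\<in>S. c a * g a p) $ n = (\<Sum>a\<in>S. fps_const (c a) * spec (g a)) $ n"
    by (simp add: spec_nth fps_sum_nth sum_distrib_left sum.swap[of _ S])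
qed

lemma qbracket_lin: "qbracket (\<lambda>p. \<Sum>a\<in>S. c a * g a p) = (\<Sum>a\<in>S. fps_const (c a) * qbracket (g a))"
  by (simp add: qbracket_alt spec_lin sum_distrib_right mult.assoc)

definition Dset :: "'i set \<Rightarrow> nat multiset \<Rightarrow> ('i \<Rightarrow> partition) set" where
  "Dset I M = {d \<in> I \<rightarrow>\<^sub>E UNIV. (\<Sum>i\<in>I. Rep_partition (d i)) = M}"

lemma useries_prod_D: "useries_prod I F p = (\<Sum>d\<in>Dset I (Rep_partition p). \<Prod>i\<in>I. F i (d i))"
  unfolding useries_prod_def Dset_def by simp

lemma sum_pos: "finite I \<Longrightarrow> 0 \<notin># (\<Sum>i\<in>I. Rep_partition (d i))"
  using Rep_pos by (simp add: set_mset_sum)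

lemma member_sub: "finite I \<Longrightarrow> j \<in> I \<Longrightarrow> Rep_partition (d j) \<subseteq># (\<Sum>i\<in>I. Rep_partition (d i))"
  by (simp add: sum.remove)

lemma finite_Dset: "finite I \<Longrightarrow> finite (Dset I (Rep_partition b))"
proof -
  assume fI: "finite I"
  have "Dset I (Rep_partition b) \<subseteq> PiE I (\<lambda>_. {q. psize q \<le> psize b})"
  proof
    fix d assume d: "d \<in> Dset I (Rep_partition b)"
    have "psize (d j) \<le> psize b" if "j \<in> I" for j
      using member_sub[OF fI that, of d] d by (intro psize_mono) (simp add: Dset_def)
    then show "d \<in> PiE I (\<lambda>_. {q. psize q \<le> psize b})" using d by (auto simp: Dset_def PiE_def)
  qed
  then show ?thesis by (rule finite_subset) (intro finite_PiE fI finite_psize_le)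
qed

lemma spec_prod_empty: "spec (useries_prod {} F) = 1"
proof (rule fps_ext)
  fix n
  have u: "useries_prod {} F p = (if Rep_partition p = {#} then 1 else 0)" for p
    by (auto simp: useries_prod_D Dset_def)
  show "spec (useries_prod {} F) $ n = 1 $ n"
  proof (cases "n = 0")
    case True
    have "{p. psize p = 0} = {Abs_partition {#}}" by (auto simp: psize0)
    then show ?thesis using True by (simp add: spec_nth u Abs_partition_inverse)
  next
    case False
    have "useries_prod {} F p = 0" if "psize p = n" for p
      using that False by (auto simp: u psize_def)
    then show ?thesis using False by (simp add: spec_nth)
  qed
qed

lemma useries_prod_insert:
  assumes fI: "finite I" and iI: "i \<notin> I"
  shows "useries_prod (insert i I) F p = useries_mult (F i) (useries_prod I F) p"
proof -
  define S where "S = Dset (insert i I) (Rep_partition p)"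
  define T where "T = (SIGMA x:pairs p. Dset I (Rep_partition (snd x)))"
  define jj where "jj = (\<lambda>e::'a \<Rightarrow> partition.
      ((e i, Abs_partition (\<Sum>k\<in>I. Rep_partition (e k))), e(i := undefined)))"
  define ii where "ii = (\<lambda>x::(partition \<times> partition) \<times> ('a \<Rightarrow> partition). (snd x)(i := fst (fst x)))"
  have RA: "Rep_partition (Abs_partition (\<Sum>k\<in>I. Rep_partition (e k))) = (\<Sum>k\<in>I. Rep_partition (e k))" for e
    using sum_pos[OF fI, of e] by (subst Abs_partition_inverse) auto
  have sumI_upd: "(\<Sum>k\<in>I. Rep_partition ((e(i := z)) k)) = (\<Sum>k\<in>I. Rep_partition (e k))" for e z
    using iI by (intro sum.cong) auto
  have "useries_mult (F i) (useries_prod I F) p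
      = (\<Sum>x\<in>pairs p. \<Sum>d\<in>Dset I (Rep_partition (snd x)). F i (fst x) * (\<Prod>k\<in>I. F k (d k)))"
    by (simp add: useries_mult_pairs useries_prod_D sum_distrib_left)
  also have "\<dots> = (\<Sum>y\<in>T. F i (fst (fst y)) * (\<Prod>k\<in>I. F k (snd y k)))"
    unfolding T_def
    by (subst sum.Sigma) (auto simp: finite_pairs finite_Dset[OF fI] case_prod_beta)
  also have "\<dots> = (\<Sum>e\<in>S. F i (e i) * (\<Prod>k\<in>I. F k (e k)))"
  proof (rule sum.reindex_bij_witness[where i = jj and j = ii])
    fix y assume y: "y \<in> T"
    then obtain a b d where yy: "y = ((a, b), d)" "Rep_partition a + Rep_partition b = Rep_partition p"
      "d \<in> I \<rightarrow>\<^sub>E UNIV" "(\<Sum>k\<in>I. Rep_partition (d k)) = Rep_partition b"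
      by (auto simp: T_def pairs_def Dset_def)
    have di: "d i = undefined" using yy(3) iI by (auto simp: PiE_def extensional_def)
    have e1: "(d(i:=a)) i = a" by simp
    have e2: "Abs_partition (\<Sum>k\<in>I. Rep_partition ((d(i:=a)) k)) = b"
      by (simp only: sumI_upd yy(4) Rep_partition_inverse)
    have e3: "(d(i:=a))(i:=undefined) = d" using di by (simp add: fun_upd_idem)
    show "jj (ii y) = y"
      unfolding ii_def jj_def yy(1) by (simp only: fst_conv snd_conv e1 e2 e3)
    have iiy: "ii y = d(i:=a)" by (simp add: ii_def yy(1))
    have m: "d(i:=a) \<in> insert i I \<rightarrow>\<^sub>E UNIV" by (rule PiE_fun_upd) (use yy(3) in auto)
    have "(\<Sum>k\<in>insert i I. Rep_partition ((d(i:=a)) k))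
        = Rep_partition ((d(i:=a)) i) + (\<Sum>k\<in>I. Rep_partition ((d(i:=a)) k))"
      by (rule sum.insert[OF fI iI])
    also have "\<dots> = Rep_partition a + Rep_partition b" by (simp only: e1 sumI_upd yy(4))
    also have "\<dots> = Rep_partition p" by (rule yy(2))
    finally have s: "(\<Sum>k\<in>insert i I. Rep_partition ((d(i:=a)) k)) = Rep_partition p" .
    show "ii y \<in> S"
      unfolding iiy S_def Dset_def using m s by blast
    show "F i (ii y i) * (\<Prod>k\<in>I. F k (ii y k)) = F i (fst (fst y)) * (\<Prod>k\<in>I. F k (snd y k))"
      using yy iI by (auto simp: ii_def intro!: prod.cong)
  next
    fix e assume e: "e \<in> S"
    then have eP: "e \<in> insert i I \<rightarrow>\<^sub>E UNIV" and es: "Rep_partition (e i) + (\<Sum>k\<in>I. Rep_partition (e k)) = Rep_partition p"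
      using fI iI by (auto simp: S_def Dset_def)
    show "ii (jj e) = e" by (auto simp: ii_def jj_def)
    have "e(i := undefined) \<in> I \<rightarrow>\<^sub>E UNIV" using fun_upd_in_PiE[OF iI eP] .
    moreover have "(\<Sum>k\<in>I. Rep_partition ((e(i:=undefined)) k)) = (\<Sum>k\<in>I. Rep_partition (e k))"
      by (rule sumI_upd)
    ultimately show "jj e \<in> T"
      using es RA[of e] by (simp add: jj_def T_def pairs_def Dset_def)
  qed
  also have "\<dots> = useries_prod (insert i I) F p"
    using fI iI by (simp add: useries_prod_D S_def)
  finally show ?thesis by simp
qed

lemma spec_prod: "finite I \<Longrightarrow> spec (useries_prod I F) = (\<Prod>i\<in>I. spec (F i))"
proof (induction I rule: finite_induct)
  case empty then show ?case by (simp add: spec_prod_empty)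
next
  case (insert i I)
  have "useries_prod (insert i I) F = useries_mult (F i) (useries_prod I F)"
    using useries_prod_insert[OF insert(1,2)] by (rule ext)
  then show ?case using insert by (simp add: spec_mult)
qed

lemma qbracket_odot_set: "finite I \<Longrightarrow> qbracket (odot_set I g) = (\<Prod>i\<in>I. qbracket (g i))"
  by (simp add: qbracket_spec ub_odot_set spec_prod)

theorem proposition3p2p5:
  fixes f :: "nat \<Rightarrow> partition \<Rightarrow> rat" and n :: nat
  assumes "n \<ge> 1"
  shows "qbracket (odot_list (map f [1..<n+1])) = (\<Prod>i=1..n. qbracket (f i))
         \<and> qbracket (connected_prod n f) = connected_qbracket n f"
proof
  have ne: "map f [1..<n+1] \<noteq> []" using assms by simp
  have "qbracket (odot_list (map f [1..<n+1])) = prod_list (map qbracket (map f [1..<n+1]))"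
    by (rule qbracket_odot_list[OF ne])
  also have "\<dots> = prod_list (map (\<lambda>i. qbracket (f i)) [1..<n+1])"
    by (simp add: comp_def)
  also have "\<dots> = (\<Prod>i\<in>set [1..<n+1]. qbracket (f i))"
    by (rule prod.distinct_set_conv_list[symmetric]) simp
  also have "set [1..<n+1] = {1..n}" by auto
  finally show "qbracket (odot_list (map f [1..<n+1])) = (\<Prod>i=1..n. qbracket (f i))" .
next
  have fin: "finite \<alpha>" if "\<alpha> \<in> set_partitions n" for \<alpha>
    using that finite_elements[of "{1..n}" \<alpha>] by (simp add: set_partitions_def)
  have "qbracket (connected_prod n f)
      = (\<Sum>\<alpha>\<in>set_partitions n. fps_const (of_int (mu_one \<alpha>)) * qbracket (odot_set \<alpha> (fprod f)))"
    unfolding connected_prod_def by (rule qbracket_lin)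
  also have "\<dots> = connected_qbracket n f"
    unfolding connected_qbracket_def
    by (intro sum.cong refl) (simp add: fin qbracket_odot_set fps_of_int)
  finally show "qbracket (connected_prod n f) = connected_qbracket n f" .
qed

end
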